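(* Let $0<\tau<1$, $q>0$, and define for $x>0$ $$f(x)=\frac{\big(x^2(1-\tau)-qx+1\big)^2}{x^3},\qquad x_2=\frac{q+\sqrt{q^2-4(1-\tau)}}{2(1-\tau)}.$$ Let $\varepsilon,\varepsilon'>0$ satisfy $1+\varepsilon<1/\varepsilon'$. (i) If $q>2-\tau$ and $x_2<1+\varepsilon$, then $$\inf_{1+\varepsilon<x<1/\varepsilon'}f(x)=f(1+\varepsilon)=\frac{\big((1+\varepsilon)^2(1-\tau)-q(1+\varepsilon)+1\big)^2}{(1+\varepsilon)^3}.$$ (ii) If $q>2+\tau$ and $1/\varepsilon'<x_2$, then $$\inf_{1+\varepsilon<x<1/\varepsilon'}f(x)=f(1/\varepsilon')=\frac{1}{\varepsilon'}\big((1-\tau)-q\varepsilon'+(\varepsilon')^2\big)^2.$$ *)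

theory Defs
  imports Complex_Main
begin

definition fLem :: "real \<Rightarrow> real \<Rightarrow> real \<Rightarrow> real" where
  "fLem \<tau> q x = (x^2 * (1 - \<tau>) - q * x + 1)^2 / x^3"

definition x2Lem :: "real \<Rightarrow> real \<Rightarrow> real" where
  "x2Lem \<tau> q = (q + sqrt (q^2 - 4 * (1 - \<tau>))) / (2 * (1 - \<tau>))"

end

theory Submission
  imports Defs
begin

lemma fLem_deriv:
  assumes "x > 0"
  shows "(fLem t q has_real_derivative
     ((x^2*(1-t) - q*x + 1) * ((1-t)*x^2 + q*x - 3) / x^4)) (at x)"
proof -
  have "((\<lambda>x. (x^2 * (1 - t) - q * x + 1)^2 / x^3) has_real_derivative
     ((2 * (x^2*(1-t) - q*x + 1) * (2*x*(1-t) - q)) * x^3 - (x^2*(1-t) - q*x + 1)^2 * (3*x^2)) / (x^3*x^3)) (at x)"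
    using assms
    by (auto intro!: derivative_eq_intros simp: power2_eq_square power3_eq_cube)
  moreover have "((2 * (x^2*(1-t) - q*x + 1) * (2*x*(1-t) - q)) * x^3 - (x^2*(1-t) - q*x + 1)^2 * (3*x^2)) / (x^3*x^3)
      = ((x^2*(1-t) - q*x + 1) * ((1-t)*x^2 + q*x - 3) / x^4)"
    using assms by (simp add: field_simps power2_eq_square power3_eq_cube) (simp add: algebra_simps power_numeral_reduce)
  ultimately show ?thesis unfolding fLem_def[abs_def] by simp
qed


lemma inf_lemma:
  fixes f :: "real \<Rightarrow> real" and a b e :: real
  assumes ab: "a < b" and e: "e = a \<or> e = b"
    and lb: "\<And>x. a < x \<Longrightarrow> x < b \<Longrightarrow> f e \<le> f x"
    and cont: "isCont f e"
  shows "Inf (f ` {a<..<b}) = f e"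
proof (rule antisym)
  have ne: "{a<..<b} \<noteq> {}" using ab by auto
  show "f e \<le> Inf (f ` {a<..<b})"
    using ne lb by (intro cInf_greatest) auto
  have bdd: "bdd_below (f ` {a<..<b})" using lb by (auto simp: bdd_below_def intro!: exI[of _ "f e"])
  have low: "\<And>x. a < x \<Longrightarrow> x < b \<Longrightarrow> Inf (f ` {a<..<b}) \<le> f x"
    using bdd by (intro cInf_lower) auto
  show "Inf (f ` {a<..<b}) \<le> f e"
    using e
  proof
    assume ea: "e = a"
    have "(f \<longlongrightarrow> f e) (at_right a)" using cont ea
      by (simp add: isCont_def filterlim_at_split)
    moreover have "eventually (\<lambda>x. Inf (f ` {a<..<b}) \<le> f x) (at_right a)"
      using ab low unfolding eventually_at_right_field by blast
    ultimately show ?thesis by (intro tendsto_lowerbound[of f "f e" "at_right a"]) auto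
  next
    assume eb: "e = b"
    have "(f \<longlongrightarrow> f e) (at_left b)" using cont eb
      by (simp add: isCont_def filterlim_at_split)
    moreover have "eventually (\<lambda>x. Inf (f ` {a<..<b}) \<le> f x) (at_left b)"
      using ab low unfolding eventually_at_left_field by blast
    ultimately show ?thesis by (intro tendsto_lowerbound[of f "f e" "at_left b"]) auto
  qed
qed

theorem lemma4p2:
  fixes \<tau> q \<epsilon> \<epsilon>' :: real
  assumes "0 < \<tau>" "\<tau> < 1" "q > 0" "\<epsilon> > 0" "\<epsilon>' > 0" "1 + \<epsilon> < 1 / \<epsilon>'"
  shows "(q > 2 - \<tau> \<and> x2Lem \<tau> q < 1 + \<epsilon> \<longrightarrow>
            Inf (fLem \<tau> q ` {1 + \<epsilon> <..< 1 / \<epsilon>'}) = fLem \<tau> q (1 + \<epsilon>)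
          \<and> fLem \<tau> q (1 + \<epsilon>) =
              ((1 + \<epsilon>)^2 * (1 - \<tau>) - q * (1 + \<epsilon>) + 1)^2 / (1 + \<epsilon>)^3)
       \<and> (q > 2 + \<tau> \<and> 1 / \<epsilon>' < x2Lem \<tau> q \<longrightarrow>
            Inf (fLem \<tau> q ` {1 + \<epsilon> <..< 1 / \<epsilon>'}) = fLem \<tau> q (1 / \<epsilon>')
          \<and> fLem \<tau> q (1 / \<epsilon>') = (1 / \<epsilon>') * ((1 - \<tau>) - q * \<epsilon>' + \<epsilon>'^2)^2)"
proof -
  define a where "a = 1 - \<tau>"
  have a0: "a > 0" "a < 1" using assms(1,2) by (auto simp: a_def)
  define g where "g x = x^2 * (1 - \<tau>) - q * x + 1" for x
  define h where "h x = (1-\<tau>)*x^2 + q*x - 3" for x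
  have cont: "isCont (fLem \<tau> q) x" if "x > 0" for x
    using fLem_deriv[OF that] by (rule DERIV_isCont)
  have dv: "(fLem \<tau> q has_real_derivative g x * h x / x^4) (at x)" if "x > 0" for x
    using fLem_deriv[OF that] by (simp add: g_def h_def)
  define s where "s = sqrt (q^2 - 4*a)"
  have x2e: "x2Lem \<tau> q = (q + s) / (2*a)" by (simp add: x2Lem_def s_def a_def)
  have D: "q^2 - 4*a > 0" if q: "q > 2 - \<tau>"
  proof -
    have "q > 1 + a" using q by (simp add: a_def)
    hence "q^2 > (1+a)^2" using a0 by (intro power_strict_mono) auto
    moreover have "(1+a)^2 \<ge> 4*a"
    proof -
      have "(1+a)^2 - 4*a = (1-a)^2" by (simp add: power2_eq_square algebra_simps)
      thus ?thesis by (metis diff_ge_0_iff_ge zero_le_power2)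
    qed
    ultimately show ?thesis by linarith
  qed
  have s0: "s \<ge> 0" and ss: "s^2 = q^2 - 4*a" if "q > 2 - \<tau>"
    using D[OF that] by (auto simp: s_def)
  have gsign: "4*a*g x = (2*a*x - q)^2 - s^2" if "q > 2 - \<tau>" for x
    using ss[OF that] unfolding g_def a_def by (simp add: power2_eq_square algebra_simps)
  have part1: "Inf (fLem \<tau> q ` {1 + \<epsilon> <..< 1 / \<epsilon>'}) = fLem \<tau> q (1 + \<epsilon>)"
    if q: "q > 2 - \<tau>" and x2: "x2Lem \<tau> q < 1 + \<epsilon>"
  proof -
    note s0 = s0[OF q] and ss = ss[OF q] and D = D[OF q]
    have x2pos: "x2Lem \<tau> q > 0" unfolding x2e using a0 s0 assms(3) by simp
    have ax2: "2*a*x2Lem \<tau> q - q = s" unfolding x2e using a0 by (simp add: field_simps)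
    have "4*a*g (x2Lem \<tau> q) = 0" using gsign[OF q] ax2 by simp
    hence "g (x2Lem \<tau> q) = 0" using a0 by simp
    hence gx2: "a * (x2Lem \<tau> q)^2 = q * x2Lem \<tau> q - 1" unfolding g_def a_def by (simp add: algebra_simps)
    have "q * x2Lem \<tau> q \<ge> q * q / (2*a)" unfolding x2e using a0 s0 assms(3)
      by (simp add: field_simps)
    moreover have "q * q / (2*a) > 2" using D a0 by (simp add: field_simps power2_eq_square)
    ultimately have qx2: "q * x2Lem \<tau> q > 2" by linarith
    have pos: "g x * h x / x^4 > 0" if "x > x2Lem \<tau> q" for x
    proof -
      have "2*a*x - q > s" using that a0 ax2 by (smt (verit, best) mult_strict_left_mono)
      hence "(2*a*x - q)^2 > s^2" using s0 by (intro power_strict_mono) auto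
      hence "4*a*g x > 0" using gsign[OF q] by simp
      hence gp: "g x > 0" using a0 by (simp add: zero_less_mult_iff)
      have xp: "x > 0" using that x2pos by simp
      have "a * (x2Lem \<tau> q)^2 \<le> a * x^2" using that x2pos a0
        by (intro mult_left_mono power_mono) auto
      moreover have "q * x2Lem \<tau> q \<le> q * x" using that assms(3) by simp
      ultimately have "h x > 0" using gx2 qx2 unfolding h_def a_def by linarith
      with gp xp show ?thesis by simp
    qed
    show ?thesis
    proof (rule inf_lemma)
      show "1 + \<epsilon> < 1 / \<epsilon>'" by fact
      show "isCont (fLem \<tau> q) (1 + \<epsilon>)" using assms by (intro cont) auto
      fix x assume x: "1 + \<epsilon> < x" "x < 1 / \<epsilon>'"
      have "fLem \<tau> q (1 + \<epsilon>) < fLem \<tau> q x"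
      proof (rule DERIV_pos_imp_increasing[OF x(1)])
        fix y assume y: "1 + \<epsilon> \<le> y" "y \<le> x"
        have "y > x2Lem \<tau> q" using y x2 by simp
        moreover have "y > 0" using y assms(4) by simp
        ultimately show "\<exists>d. DERIV (fLem \<tau> q) y :> d \<and> d > 0" using dv pos by blast
      qed
      thus "fLem \<tau> q (1 + \<epsilon>) \<le> fLem \<tau> q x" by simp
    qed simp
  qed
  have part2: "Inf (fLem \<tau> q ` {1 + \<epsilon> <..< 1 / \<epsilon>'}) = fLem \<tau> q (1 / \<epsilon>')"
    if q: "q > 2 + \<tau>" and x2: "1 / \<epsilon>' < x2Lem \<tau> q"
  proof -
    have q': "q > 2 - \<tau>" using q assms(1) by simp
    note s0 = s0[OF q'] and ss = ss[OF q']
    have ax2: "2*a*x2Lem \<tau> q - q = s" unfolding x2e using a0 by (simp add: field_simps)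
    have qs: "q - 2*a \<le> s"
    proof (cases "q - 2*a \<le> 0")
      case False
      have "(1-\<tau>)*(q-(2-\<tau>)) \<ge> 0" using q' assms(2) by simp
      hence "(q - 2*a)^2 \<le> s^2" unfolding ss
        by (simp add: power2_eq_square algebra_simps a_def)
      thus ?thesis using s0 by (meson power2_le_imp_le)
    qed (use s0 in simp)
    have neg: "g x * h x / x^4 < 0" if "x > 1" "x < x2Lem \<tau> q" for x
    proof -
      have "2*a*x - q < s" using that a0 ax2 by (smt (verit, best) mult_strict_left_mono)
      moreover have "2*a*x - q > - s"
      proof -
        have "a * 1 < a * x" using that a0 by (intro mult_strict_left_mono) auto
        thus ?thesis using qs by linarith
      qed
      ultimately have "\<bar>2*a*x - q\<bar> < s" by linarith
      hence "\<bar>2*a*x - q\<bar>^2 < s^2" by (intro power_strict_mono) auto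
      hence "(2*a*x - q)^2 < s^2" by simp
      hence "4*a*g x < 0" using gsign[OF q'] by simp
      hence gn: "g x < 0" using a0 by (simp add: mult_less_0_iff)
      have xp: "x > 0" using that by simp
      have "a * 1 \<le> a * x^2" using that a0
        by (intro mult_left_mono) (auto simp: one_le_power)
      moreover have "q \<le> q * x" using that assms(3) by simp
      ultimately have "h x > 0" using q unfolding h_def a_def by (simp only: mult_1_right)
      with gn xp show ?thesis by (intro divide_neg_pos mult_neg_pos) auto
    qed
    show ?thesis
    proof (rule inf_lemma)
      show "1 + \<epsilon> < 1 / \<epsilon>'" by fact
      show "isCont (fLem \<tau> q) (1 / \<epsilon>')" using assms by (intro cont) auto
      fix x assume x: "1 + \<epsilon> < x" "x < 1 / \<epsilon>'"
      have "fLem \<tau> q x > fLem \<tau> q (1 / \<epsilon>')"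
      proof (rule DERIV_neg_imp_decreasing[OF x(2)])
        fix y assume y: "x \<le> y" "y \<le> 1 / \<epsilon>'"
        have "y < x2Lem \<tau> q" using y x2 by simp
        moreover have "y > 1" using y x assms(4) by simp
        ultimately show "\<exists>d. DERIV (fLem \<tau> q) y :> d \<and> d < 0" using dv neg by force
      qed
      thus "fLem \<tau> q (1 / \<epsilon>') \<le> fLem \<tau> q x" by simp
    qed simp
  qed
  have e2: "fLem \<tau> q (1 / \<epsilon>') = (1 / \<epsilon>') * ((1 - \<tau>) - q * \<epsilon>' + \<epsilon>'^2)^2"
    using assms(5) unfolding fLem_def
    by (simp add: field_simps power2_eq_square power3_eq_cube)
  show ?thesis using part1 part2 e2 by (simp add: fLem_def)
qed

end
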